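(* Assume each $f_i$ has degree $d_i\ge1$. Suppose $\lambda>0$ and $v=(v_1,\ldots,v_n,v_{n+1})\in K_1^\circ$ satisfy $\lambda v_{n+1}=-1$ (i.e., $\Delta\tilde y=\lambda[v]_1$ satisfies $\langle x_{n+1},\Delta\tilde y\rangle=-1$ and $\Delta\tilde y\in\mathscr R_1(K_1^\circ)$). If the point $(0,v)$ lies in the closure of $\widetilde K_1\cap\{x_0>0\}$, then the problem $\min x_{n+1}$ over $K_1$ and the problem $\min_{x\in K}\max_i f_i(x)$ are both unbounded below, and hence there are no weakly Pareto points.
   Context: $f_1,\ldots,f_m,c_i$ ($i\in\mathcal E\cup\mathcal I$) are real polynomials in $x\in\mathbb R^n$, $K=\{x: c_i(x)=0\ (i\in\mathcal E),\ c_j(x)\ge0\ (j\in\mathcal I)\}$, $d_i=\deg f_i$. For a polynomial $p$ of degree $e$ in $x$, $\tilde p(x_0,x)=x_0^ep(x/x_0)$ and $p^{hom}(x)=\tilde p(0,x)$; $\tilde x=(x_0,x)$. Define $K_1=\{(x,x_{n+1})\in\mathbb R^{n+1}: -(-x_{n+1})^{d_i}-f_i(x)\ge0\ (i\in[m]),\ x\in K\}$, $\widetilde K_1=\{(x_0,x,x_{n+1}): -(-x_{n+1})^{d_i}-\tilde f_i(\tilde x)\ge0\ (i\in[m]),\ \tilde c_i(\tilde x)=0\ (i\in\mathcal E),\ \tilde c_j(\tilde x)\ge0\ (j\in\mathcal I),\ \|\tilde x\|^2+x_{n+1}^2=1,\ x_0\ge0\}$, and $K_1^\circ=\{(x,x_{n+1}):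 -(-x_{n+1})^{d_i}-f_i^{hom}(x)\ge0\ (i\in[m]),\ c_i^{hom}(x)=0\ (i\in\mathcal E),\ c_j^{hom}(x)\ge0\ (j\in\mathcal I),\ \|x\|^2+x_{n+1}^2=1\}$. $[v]_1=(1,v)$, $\mathscr R_1(T)$ is the set of degree-1 moment vectors of Borel measures supported in $T$. A point $x^*\in K$ is weakly Pareto if no $x\in K$ has $f_i(x)<f_i(x^* )$ for all $i$. *)

theory Defs
  imports "HOL-Analysis.Analysis" "HOL-Library.Poly_Mapping"
begin

text \<open>A polynomial is a finitely supported map from
  monomials (exponent vectors 'n => nat) to real coefficients.\<close>

type_synonym 'n rpoly = "('n \<Rightarrow> nat) \<Rightarrow>\<^sub>0 real"

definition mon_deg :: "('n::finite \<Rightarrow> nat) \<Rightarrow> nat" where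
  "mon_deg a = (\<Sum>i\<in>UNIV. a i)"

definition mon_eval :: "('n::finite \<Rightarrow> nat) \<Rightarrow> real^'n \<Rightarrow> real" where
  "mon_eval a x = (\<Prod>i\<in>UNIV. (x $ i) ^ a i)"

definition peval :: "'n::finite rpoly \<Rightarrow> real^'n \<Rightarrow> real" where
  "peval p x = (\<Sum>a\<in>Poly_Mapping.keys p. Poly_Mapping.lookup p a * mon_eval a x)"

text \<open>total degree (0 for the zero polynomial)\<close>
definition pdeg :: "'n::finite rpoly \<Rightarrow> nat" where
  "pdeg p = Max (insert 0 (mon_deg ` Poly_Mapping.keys p))"

text \<open>homogenization: tilde p (x0,x) = x0^e p(x/x0), e = deg p\<close>
definition phomog :: "'n::finite rpoly \<Rightarrow> real \<Rightarrow> real^'n \<Rightarrow> real" where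
  "phomog p x0 x = (\<Sum>a\<in>Poly_Mapping.keys p. Poly_Mapping.lookup p a * x0 ^ (pdeg p - mon_deg a) * mon_eval a x)"

text \<open>highest-degree part: p^hom(x) = tilde p (0,x)\<close>
definition phom :: "'n::finite rpoly \<Rightarrow> real^'n \<Rightarrow> real" where
  "phom p x = phomog p 0 x"

definition feasK :: "('c \<Rightarrow> 'n::finite rpoly) \<Rightarrow> 'c set \<Rightarrow> 'c set \<Rightarrow> (real^'n) set" where
  "feasK c E I = {x. (\<forall>i\<in>E. peval (c i) x = 0) \<and> (\<forall>j\<in>I. peval (c j) x \<ge> 0)}"

definition K1 :: "(nat \<Rightarrow> 'n::finite rpoly) \<Rightarrow> nat \<Rightarrow> ('c \<Rightarrow> 'n rpoly) \<Rightarrow> 'c set \<Rightarrow> 'c set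
    \<Rightarrow> ((real^'n) \<times> real) set" where
  "K1 f m c E I = {(x, t). (\<forall>i<m. - ((- t) ^ pdeg (f i)) - peval (f i) x \<ge> 0) \<and> x \<in> feasK c E I}"

definition K1_tilde :: "(nat \<Rightarrow> 'n::finite rpoly) \<Rightarrow> nat \<Rightarrow> ('c \<Rightarrow> 'n rpoly) \<Rightarrow> 'c set \<Rightarrow> 'c set
    \<Rightarrow> (real \<times> (real^'n) \<times> real) set" where
  "K1_tilde f m c E I = {(x0, x, t).
      (\<forall>i<m. - ((- t) ^ pdeg (f i)) - phomog (f i) x0 x \<ge> 0) \<and>
      (\<forall>i\<in>E. phomog (c i) x0 x = 0) \<and> (\<forall>j\<in>I. phomog (c j) x0 x \<ge> 0) \<and>
      x0\<^sup>2 + (norm x)\<^sup>2 + t\<^sup>2 = 1 \<and> x0 \<ge> 0}"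

definition K1_circ :: "(nat \<Rightarrow> 'n::finite rpoly) \<Rightarrow> nat \<Rightarrow> ('c \<Rightarrow> 'n rpoly) \<Rightarrow> 'c set \<Rightarrow> 'c set
    \<Rightarrow> ((real^'n) \<times> real) set" where
  "K1_circ f m c E I = {(x, t).
      (\<forall>i<m. - ((- t) ^ pdeg (f i)) - phom (f i) x \<ge> 0) \<and>
      (\<forall>i\<in>E. phom (c i) x = 0) \<and> (\<forall>j\<in>I. phom (c j) x \<ge> 0) \<and>
      (norm x)\<^sup>2 + t\<^sup>2 = 1}"

definition weakly_pareto :: "(nat \<Rightarrow> 'n::finite rpoly) \<Rightarrow> nat \<Rightarrow> (real^'n) set \<Rightarrow> real^'n \<Rightarrow> bool" where
  "weakly_pareto f m K xs \<longleftrightarrow> xs \<in> K \<and> \<not> (\<exists>x\<in>K. \<forall>i<m. peval (f i) x < peval (f i) xs)"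

end

theory Submission
  imports Defs
begin

lemma mon_eval_scale: "mon_eval a (c *\<^sub>R x) = c ^ mon_deg a * mon_eval a x"
  unfolding mon_eval_def mon_deg_def
  by (simp add: power_mult_distrib prod.distrib power_sum)

lemma mon_deg_le: "a \<in> Poly_Mapping.keys p \<Longrightarrow> mon_deg a \<le> pdeg p"
  unfolding pdeg_def by (intro Max_ge) auto

lemma phomog_pos:
  assumes "x0 > 0"
  shows "phomog p x0 x = x0 ^ pdeg p * peval p ((1/x0) *\<^sub>R x)"
proof -
  have "phomog p x0 x = (\<Sum>a\<in>Poly_Mapping.keys p. x0 ^ pdeg p *
           (Poly_Mapping.lookup p a * mon_eval a ((1/x0) *\<^sub>R x)))"
    unfolding phomog_def
  proof (rule sum.cong[OF refl])
    fix a assume a: "a \<in> Poly_Mapping.keys p"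
    have le: "mon_deg a \<le> pdeg p" using mon_deg_le[OF a] .
    have "x0 ^ pdeg p = x0 ^ (pdeg p - mon_deg a) * x0 ^ mon_deg a"
      using le by (simp add: power_add[symmetric])
    hence "x0 ^ (pdeg p - mon_deg a) = x0 ^ pdeg p * (1/x0) ^ mon_deg a"
      using assms by (simp add: power_one_over field_simps)
    thus "Poly_Mapping.lookup p a * x0 ^ (pdeg p - mon_deg a) * mon_eval a x =
        x0 ^ pdeg p * (Poly_Mapping.lookup p a * mon_eval a ((1 / x0) *\<^sub>R x))"
      by (simp add: mon_eval_scale)
  qed
  also have "\<dots> = x0 ^ pdeg p * peval p ((1/x0) *\<^sub>R x)"
    unfolding peval_def by (simp add: sum_distrib_left)
  finally show ?thesis .
qed

theorem theorem7p3:
  fixes f :: "nat \<Rightarrow> 'n::finite rpoly" and m :: nat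
    and c :: "'c \<Rightarrow> 'n rpoly" and E I :: "'c set"
    and lam :: real and v :: "(real^'n) \<times> real"
  assumes "m \<ge> 1" and "finite E" and "finite I"
    and "\<forall>i<m. pdeg (f i) \<ge> 1"
    and "lam > 0" and "v \<in> K1_circ f m c E I" and "lam * snd v = -1"
    and "(0, fst v, snd v) \<in> closure (K1_tilde f m c E I \<inter> {(x0, x, t). x0 > 0})"
  shows "(\<forall>M::real. \<exists>(x, t)\<in>K1 f m c E I. t < M)
       \<and> (\<forall>M::real. \<exists>x\<in>feasK c E I. (MAX i\<in>{..<m}. peval (f i) x) < M)
       \<and> \<not> (\<exists>xs. weakly_pareto f m (feasK c E I) xs)"
proof -
  define t where "t = snd v"
  have tneg: "t < 0"
  proof (rule ccontr)
    assume "\<not> t < 0"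
    hence "lam * t \<ge> 0" using assms(5) by simp
    thus False using assms(7) unfolding t_def by simp
  qed
  have A: "\<exists>y s. (y, s) \<in> K1 f m c E I \<and> s < M" for M :: real
  proof -
    define M' where "M' = min M (-1)"
    have M': "M' < 0" "M' \<le> M" unfolding M'_def by auto
    define e where "e = min (-t/2) (t/(2*M'))"
    have epos: "e > 0" unfolding e_def using tneg M' by (auto simp: divide_pos_neg zero_less_divide_iff)
    obtain z where z: "z \<in> K1_tilde f m c E I \<inter> {(x0, x, t). x0 > 0}"
      and dz: "dist z (0, fst v, snd v) < e"
      using assms(8) epos unfolding closure_approachable by blast
    obtain x0 x tk where zz: "z = (x0, x, tk)" by (cases z) auto
    have x0: "x0 > 0" using z zz by auto
    have "dist x0 0 < e" using dist_fst_le[of z "(0, fst v, snd v)"] dz zz by simp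
    hence x0e: "x0 < e" using x0 by simp
    have "dist (snd (snd z)) (snd (snd (0::real, fst v, snd v))) \<le> dist z (0, fst v, snd v)"
      by (meson dist_snd_le order_trans)
    hence "dist tk t < e" using dz zz unfolding t_def by simp
    hence tk: "tk < t/2" unfolding e_def dist_real_def by auto
    have "x0 < t/(2*M')" using x0e unfolding e_def by auto
    hence "M' * x0 > t/2" using M' by (simp add: field_simps)
    hence "tk < M' * x0" using tk by linarith
    hence slt: "tk / x0 < M'" using x0 by (simp add: field_simps)
    define y where "y = (1/x0) *\<^sub>R x"
    define s where "s = tk / x0"
    have zt: "(x0, x, tk) \<in> K1_tilde f m c E I" using z zz by auto
    have pp: "x0 ^ d > 0" for d :: nat using x0 by simp
    have "(y, s) \<in> K1 f m c E I"
      unfolding K1_def feasK_def mem_Collect_eq prod.case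
    proof (intro conjI ballI allI impI)
      fix i assume i: "i < m"
      have h: "- ((- tk) ^ pdeg (f i)) - x0 ^ pdeg (f i) * peval (f i) y \<ge> 0"
        using zt i unfolding K1_tilde_def y_def by (simp add: phomog_pos[OF x0])
      have "- tk = x0 * (- s)" unfolding s_def using x0 by simp
      hence "(- tk) ^ pdeg (f i) = x0 ^ pdeg (f i) * (- s) ^ pdeg (f i)"
        by (simp only: power_mult_distrib)
      hence "x0 ^ pdeg (f i) * (- ((- s) ^ pdeg (f i)) - peval (f i) y) \<ge> 0"
        using h by (simp add: algebra_simps)
      thus "- ((- s) ^ pdeg (f i)) - peval (f i) y \<ge> 0"
        using pp[of "pdeg (f i)"] by (simp add: zero_le_mult_iff)
    next
      fix i assume "i \<in> E"
      hence "x0 ^ pdeg (c i) * peval (c i) y = 0"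
        using zt unfolding K1_tilde_def y_def by (simp add: phomog_pos[OF x0])
      thus "peval (c i) y = 0" using x0 by simp
    next
      fix j assume "j \<in> I"
      hence "x0 ^ pdeg (c j) * peval (c j) y \<ge> 0"
        using zt unfolding K1_tilde_def y_def by (simp add: phomog_pos[OF x0])
      thus "peval (c j) y \<ge> 0" using pp[of "pdeg (c j)"] by (simp add: zero_le_mult_iff)
    qed
    moreover have "s < M" using slt M' unfolding s_def by linarith
    ultimately show ?thesis by blast
  qed
  have B: "\<exists>x\<in>feasK c E I. (MAX i\<in>{..<m}. peval (f i) x) < M" for M :: real
  proof -
    obtain y s where ys: "(y, s) \<in> K1 f m c E I" "s < min M (-1)" using A by blast
    have "peval (f i) y < M" if i: "i < m" for i
    proof -
      have h: "- ((- s) ^ pdeg (f i)) - peval (f i) y \<ge> 0" using ys(1) i unfolding K1_def by auto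
      have "(- s) ^ 1 \<le> (- s) ^ pdeg (f i)"
        using ys(2) assms(4) i by (intro power_increasing) auto
      thus ?thesis using h ys(2) by simp
    qed
    moreover have "y \<in> feasK c E I" using ys(1) unfolding K1_def by auto
    moreover have "{..<m} \<noteq> {}" proof -
      have "(0::nat) \<in> {..<m}" using assms(1) by simp
      thus ?thesis by blast
    qed
    ultimately show ?thesis by (intro bexI[of _ y]) (auto simp: Max_less_iff)
  qed
  have C: "\<not> weakly_pareto f m (feasK c E I) xs" for xs
  proof
    assume w: "weakly_pareto f m (feasK c E I) xs"
    obtain x where x: "x \<in> feasK c E I"
      "(MAX i\<in>{..<m}. peval (f i) x) < (MIN i\<in>{..<m}. peval (f i) xs)" using B by blast
    have "\<forall>i<m. peval (f i) x < peval (f i) xs"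
    proof (intro allI impI)
      fix i assume i: "i < m"
      have "peval (f i) x \<le> (MAX i\<in>{..<m}. peval (f i) x)" using i by (intro Max_ge) auto
      also have "(MIN i\<in>{..<m}. peval (f i) xs) \<le> peval (f i) xs" using i by (intro Min_le) auto
      ultimately show "peval (f i) x < peval (f i) xs" using x(2) by linarith
    qed
    thus False using w x(1) unfolding weakly_pareto_def by blast
  qed
  show ?thesis using A B C by blast
qed

end
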